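(* For each $n\ge1$, the maximum number of target-free cliques in a simple directed graph on $n$ nodes equals the maximum number of maximal cliques in a simple undirected graph on $n$ nodes.
   Context: In a simple directed graph, a clique is a nonempty set of nodes pairwise bidirectionally connected; a target of a clique $\sigma$ is a node $k\notin\sigma$ with $i\to k$ for all $i\in\sigma$; a target-free clique has no target. In an undirected graph, a maximal clique is a clique not properly contained in another clique. *)

theory Defs
  imports Main
begin

definition simple_digraph :: "nat \<Rightarrow> (nat \<Rightarrow> nat \<Rightarrow> bool) \<Rightarrow> bool" where
  "simple_digraph n E \<longleftrightarrow> (\<forall>i j. E i j \<longrightarrow> i < n \<and> j < n \<and> i \<noteq> j)"

definition simple_graph :: "nat \<Rightarrow> (nat \<Rightarrow> nat \<Rightarrow> bool) \<Rightarrow> bool" where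
  "simple_graph n E \<longleftrightarrow> simple_digraph n E \<and> (\<forall>i j. E i j \<longrightarrow> E j i)"

definition dclique :: "nat \<Rightarrow> (nat \<Rightarrow> nat \<Rightarrow> bool) \<Rightarrow> nat set \<Rightarrow> bool" where
  "dclique n E \<sigma> \<longleftrightarrow> \<sigma> \<noteq> {} \<and> \<sigma> \<subseteq> {..<n} \<and>
     (\<forall>i\<in>\<sigma>. \<forall>j\<in>\<sigma>. i \<noteq> j \<longrightarrow> E i j \<and> E j i)"

definition is_target :: "nat \<Rightarrow> (nat \<Rightarrow> nat \<Rightarrow> bool) \<Rightarrow> nat set \<Rightarrow> nat \<Rightarrow> bool" where
  "is_target n E \<sigma> k \<longleftrightarrow> k < n \<and> k \<notin> \<sigma> \<and> (\<forall>i\<in>\<sigma>. E i k)"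

definition target_free_clique :: "nat \<Rightarrow> (nat \<Rightarrow> nat \<Rightarrow> bool) \<Rightarrow> nat set \<Rightarrow> bool" where
  "target_free_clique n E \<sigma> \<longleftrightarrow> dclique n E \<sigma> \<and> \<not> (\<exists>k. is_target n E \<sigma> k)"

definition uclique :: "nat \<Rightarrow> (nat \<Rightarrow> nat \<Rightarrow> bool) \<Rightarrow> nat set \<Rightarrow> bool" where
  "uclique n E C \<longleftrightarrow> C \<noteq> {} \<and> C \<subseteq> {..<n} \<and> (\<forall>i\<in>C. \<forall>j\<in>C. i \<noteq> j \<longrightarrow> E i j)"

definition maximal_clique :: "nat \<Rightarrow> (nat \<Rightarrow> nat \<Rightarrow> bool) \<Rightarrow> nat set \<Rightarrow> bool" where
  "maximal_clique n E C \<longleftrightarrow> uclique n E C \<and> \<not> (\<exists>D. uclique n E D \<and> C \<subset> D)"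

definition num_target_free :: "nat \<Rightarrow> (nat \<Rightarrow> nat \<Rightarrow> bool) \<Rightarrow> nat" where
  "num_target_free n E = card {\<sigma>. target_free_clique n E \<sigma>}"

definition num_maximal_cliques :: "nat \<Rightarrow> (nat \<Rightarrow> nat \<Rightarrow> bool) \<Rightarrow> nat" where
  "num_maximal_cliques n E = card {C. maximal_clique n E C}"

end

theory Submission
  imports Defs
begin

lemma sym_tf_iff:
  assumes "simple_graph n E"
  shows "target_free_clique n E \<sigma> \<longleftrightarrow> maximal_clique n E \<sigma>"
proof
  assume tf: "target_free_clique n E \<sigma>"
  hence u: "uclique n E \<sigma>" unfolding target_free_clique_def dclique_def uclique_def by blast
  show "maximal_clique n E \<sigma>" unfolding maximal_clique_def
  proof (intro conjI u notI)
    assume "\<exists>D. uclique n E D \<and> \<sigma> \<subset> D"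
    then obtain D k where D: "uclique n E D" "\<sigma> \<subset> D" "k \<in> D" "k \<notin> \<sigma>" by blast
    have "is_target n E \<sigma> k" using D unfolding is_target_def uclique_def by auto
    thus False using tf unfolding target_free_clique_def by blast
  qed
next
  assume m: "maximal_clique n E \<sigma>"
  have sym: "\<And>i j. E i j \<Longrightarrow> E j i" using assms unfolding simple_graph_def by blast
  have d: "dclique n E \<sigma>" using m sym unfolding maximal_clique_def uclique_def dclique_def by blast
  show "target_free_clique n E \<sigma>" unfolding target_free_clique_def
  proof (intro conjI d notI)
    assume "\<exists>k. is_target n E \<sigma> k"
    then obtain k where k: "is_target n E \<sigma> k" by blast
    have "uclique n E (insert k \<sigma>)" using k m sym
      unfolding is_target_def maximal_clique_def uclique_def by auto
    moreover have "\<sigma> \<subset> insert k \<sigma>" using k unfolding is_target_def by auto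
    ultimately show False using m unfolding maximal_clique_def by blast
  qed
qed

lemma fin_max: "finite {C. maximal_clique n E C}"
  by (rule finite_subset[of _ "Pow {..<n}"]) (auto simp: maximal_clique_def uclique_def)

lemma fin_tf: "finite {C. target_free_clique n E C}"
  by (rule finite_subset[of _ "Pow {..<n}"]) (auto simp: target_free_clique_def dclique_def)

lemma bound_max: "num_maximal_cliques n E \<le> 2 ^ n"
proof -
  have "num_maximal_cliques n E \<le> card (Pow {..<n::nat})"
    unfolding num_maximal_cliques_def
    by (rule card_mono) (auto simp: maximal_clique_def uclique_def)
  thus ?thesis by (simp add: card_Pow)
qed

lemma bound_tf: "num_target_free n E \<le> 2 ^ n"
proof -
  have "num_target_free n E \<le> card (Pow {..<n::nat})"
    unfolding num_target_free_def
    by (rule card_mono) (auto simp: target_free_clique_def dclique_def)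
  thus ?thesis by (simp add: card_Pow)
qed

lemma dig_le:
  assumes "simple_digraph n E"
  shows "\<exists>G. simple_graph n G \<and> num_target_free n E \<le> num_maximal_cliques n G"
proof -
  define G where "G = (\<lambda>i j. E i j \<and> E j i)"
  have sg: "simple_graph n G" using assms unfolding G_def simple_graph_def simple_digraph_def by blast
  have "{\<sigma>. target_free_clique n E \<sigma>} \<subseteq> {C. maximal_clique n G C}"
  proof
    fix \<sigma> assume "\<sigma> \<in> {\<sigma>. target_free_clique n E \<sigma>}"
    hence tf: "target_free_clique n E \<sigma>" by simp
    have u: "uclique n G \<sigma>" using tf unfolding target_free_clique_def dclique_def uclique_def G_def by blast
    have "\<not> (\<exists>D. uclique n G D \<and> \<sigma> \<subset> D)"
    proof
      assume "\<exists>D. uclique n G D \<and> \<sigma> \<subset> D"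
      then obtain D k where D: "uclique n G D" "\<sigma> \<subset> D" "k \<in> D" "k \<notin> \<sigma>" by blast
      have "is_target n E \<sigma> k" using D unfolding is_target_def uclique_def G_def by auto
      thus False using tf unfolding target_free_clique_def by blast
    qed
    thus "\<sigma> \<in> {C. maximal_clique n G C}" using u by (simp add: maximal_clique_def)
  qed
  hence "num_target_free n E \<le> num_maximal_cliques n G"
    unfolding num_target_free_def num_maximal_cliques_def using fin_max by (rule card_mono[rotated])
  thus ?thesis using sg by blast
qed

theorem lemma8:
  fixes n :: nat
  assumes "n \<ge> 1"
  shows "Max {num_target_free n E | E. simple_digraph n E}
       = Max {num_maximal_cliques n E | E. simple_graph n E}"
proof -
  let ?A = "{num_target_free n E | E. simple_digraph n E}"
  let ?B = "{num_maximal_cliques n E | E. simple_graph n E}"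
  have e: "simple_graph n (\<lambda>i j. False)" by (simp add: simple_graph_def simple_digraph_def)
  have BA: "?B \<subseteq> ?A"
  proof
    fix x assume "x \<in> ?B"
    then obtain E where E: "simple_graph n E" "x = num_maximal_cliques n E" by blast
    have "num_maximal_cliques n E = num_target_free n E"
      unfolding num_maximal_cliques_def num_target_free_def using sym_tf_iff[OF E(1)] by (metis (no_types) Collect_cong)
    moreover have "simple_digraph n E" using E(1) by (simp add: simple_graph_def)
    ultimately show "x \<in> ?A" using E(2) by blast
  qed
  have fA: "finite ?A" by (rule finite_subset[of _ "{..2^n}"]) (auto intro: bound_tf)
  have fB: "finite ?B" by (rule finite_subset[of _ "{..2^n}"]) (auto intro: bound_max)
  have nB: "?B \<noteq> {}" using e by blast
  have nA: "?A \<noteq> {}" using nB BA by blast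
  have "Max ?A \<in> ?A" using fA nA by (rule Max_in)
  then obtain E where E: "simple_digraph n E" "Max ?A = num_target_free n E" by blast
  obtain G where G: "simple_graph n G" "num_target_free n E \<le> num_maximal_cliques n G"
    using dig_le[OF E(1)] by blast
  have "num_maximal_cliques n G \<le> Max ?B" using fB G(1) by (intro Max_ge) auto
  hence "Max ?A \<le> Max ?B" using E G by linarith
  moreover have "Max ?B \<le> Max ?A" using BA nB fA by (rule Max_mono)
  ultimately show ?thesis by simp
qed

end
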